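(* Let $r \ge 1$ and let $E, B \subseteq \mathbb{R}^r$ be axis-aligned bounding boxes. Then the function $g : \mathbb{R}^r \to \mathbb{R}$ defined by $g(p) = \mathrm{MaxDist}(p, E)^2 - \mathrm{MinDist}(p, B)^2$ is convex.
   Context: An axis-aligned bounding box (AABB) in $\mathbb{R}^r$ is a set $M = \prod_{d=1}^r [\check{M}_d, \hat{M}_d]$ with real numbers $\check{M}_d \le \hat{M}_d$ for each $d$. $\mathrm{dist}$ is the Euclidean distance on $\mathbb{R}^r$. For a point $p$ and an AABB $M$, $\mathrm{MaxDist}(p, M) = \max_{q \in M} \mathrm{dist}(p, q)$ and $\mathrm{MinDist}(p, M) = \min_{q \in M} \mathrm{dist}(p, q)$. *)

theory Defs
  imports "HOL-Analysis.Analysis"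
begin

text \<open>Points of R^r are vectors of type real^'r (r = CARD('r) >= 1).
  An axis-aligned bounding box is a product of nonempty closed intervals.\<close>

definition is_aabb :: "(real ^ 'r) set \<Rightarrow> bool" where
  "is_aabb M \<longleftrightarrow> (\<exists>lo hi :: real ^ 'r. (\<forall>d. lo $ d \<le> hi $ d) \<and>
      M = {x. \<forall>d. lo $ d \<le> x $ d \<and> x $ d \<le> hi $ d})"

definition MaxDist :: "real ^ 'r \<Rightarrow> (real ^ 'r) set \<Rightarrow> real" where
  "MaxDist p M = (SUP q\<in>M. dist p q)"

definition MinDist :: "real ^ 'r \<Rightarrow> (real ^ 'r) set \<Rightarrow> real" where
  "MinDist p M = (INF q\<in>M. dist p q)"

end

theory Submission
  imports Defs
begin

lemma aabb_compact:
  assumes "is_aabb (M :: (real ^ 'r) set)"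
  shows "compact M" "M \<noteq> {}"
proof -
  obtain lo hi :: "real ^ 'r" where le: "\<forall>d. lo $ d \<le> hi $ d"
    and M: "M = {x. \<forall>d. lo $ d \<le> x $ d \<and> x $ d \<le> hi $ d}"
    using assms unfolding is_aabb_def by blast
  have M': "M = cbox lo hi" using M interval_cart(2)[of lo hi] by simp
  show "compact M" using M' by simp
  show "M \<noteq> {}" using M' le by (simp add: interval_ne_empty_cart(1))
qed

lemma maxdist_attain:
  assumes "compact (E :: (real ^ 'r) set)" "E \<noteq> {}"
  shows "\<exists>q\<in>E. MaxDist p E = dist p q"
proof -
  have "continuous_on E (dist p)" by (intro continuous_intros)
  hence "compact (dist p ` E)" using assms(1) by (rule compact_continuous_image)
  moreover have "dist p ` E \<noteq> {}" using assms(2) by simp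
  ultimately obtain s where s: "s \<in> dist p ` E" "\<forall>t\<in>dist p ` E. t \<le> s"
    using compact_attains_sup by blast
  then obtain q where q: "q \<in> E" "s = dist p q" by blast
  have q2: "\<forall>y\<in>E. dist p y \<le> dist p q" using s q by auto
  have "MaxDist p E = dist p q" unfolding MaxDist_def
    by (rule cSup_eq_maximum) (use q q2 in auto)
  thus ?thesis using q by blast
qed

lemma maxdist_upper:
  assumes "compact (E :: (real ^ 'r) set)" "q \<in> E"
  shows "dist p q \<le> MaxDist p E"
proof -
  have "bounded (dist p ` E)"
    using assms by (intro compact_imp_bounded compact_continuous_image) (auto intro: continuous_intros)
  hence "bdd_above (dist p ` E)" by (rule bounded_imp_bdd_above)
  thus ?thesis unfolding MaxDist_def using assms by (intro cSUP_upper) auto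
qed

lemma mindist_eq: "B \<noteq> {} \<Longrightarrow> MinDist p B = infdist p B"
  by (simp add: MinDist_def infdist_def)

lemma h: fixes z a b :: "real ^ 'r"
  shows "(dist z a)\<^sup>2 - (dist z b)\<^sup>2 = 2 * inner z (b - a) + (norm a)\<^sup>2 - (norm b)\<^sup>2"
  unfolding dist_norm power2_norm_eq_inner
  by (simp add: inner_diff_left inner_diff_right inner_commute)
lemma key_identity:
  fixes x y a b :: "real ^ 'r"
  shows "(dist ((1 - t) *\<^sub>R x + t *\<^sub>R y) a)\<^sup>2 - (dist ((1 - t) *\<^sub>R x + t *\<^sub>R y) b)\<^sup>2
    = (1 - t) * ((dist x a)\<^sup>2 - (dist x b)\<^sup>2) + t * ((dist y a)\<^sup>2 - (dist y b)\<^sup>2)"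
  unfolding h by (simp add: inner_add_left algebra_simps)

theorem lemma4p4:
  fixes E B :: "(real ^ 'r) set"
  assumes "is_aabb E" and "is_aabb B"
  shows "convex_on UNIV (\<lambda>p. (MaxDist p E)\<^sup>2 - (MinDist p B)\<^sup>2)"
proof (rule convex_onI)
  show "convex (UNIV :: (real ^ 'r) set)" by simp
  fix t :: real and x y :: "real ^ 'r"
  assume t: "0 < t" "t < 1"
  define z where "z = (1 - t) *\<^sub>R x + t *\<^sub>R y"
  have cE: "compact E" "E \<noteq> {}" and cB: "compact B" "B \<noteq> {}"
    using aabb_compact assms by blast+
  obtain q where q: "q \<in> E" "MaxDist z E = dist z q" using maxdist_attain cE by blast
  obtain b where b: "b \<in> B" "infdist z B = dist z b"
    by (rule infdist_attains_inf[OF compact_imp_closed[OF cB(1)] cB(2), of z])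
  have mz: "MinDist z B = dist z b" using b(2) mindist_eq[OF cB(2)] by simp
  have hx: "(dist x q)\<^sup>2 - (dist x b)\<^sup>2 \<le> (MaxDist x E)\<^sup>2 - (MinDist x B)\<^sup>2"
  proof -
    have "dist x q \<le> MaxDist x E" using maxdist_upper cE q by blast
    hence 1: "(dist x q)\<^sup>2 \<le> (MaxDist x E)\<^sup>2" by (simp add: power_mono)
    have "MinDist x B \<le> dist x b" unfolding mindist_eq[OF cB(2)] by (rule infdist_le[OF b(1)])
    moreover have "0 \<le> MinDist x B" unfolding mindist_eq[OF cB(2)] by (rule infdist_nonneg)
    ultimately have "(MinDist x B)\<^sup>2 \<le> (dist x b)\<^sup>2" by (simp add: power_mono)
    with 1 show ?thesis by linarith
  qed
  have hy: "(dist y q)\<^sup>2 - (dist y b)\<^sup>2 \<le> (MaxDist y E)\<^sup>2 - (MinDist y B)\<^sup>2"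
  proof -
    have "dist y q \<le> MaxDist y E" using maxdist_upper cE q by blast
    hence 1: "(dist y q)\<^sup>2 \<le> (MaxDist y E)\<^sup>2" by (simp add: power_mono)
    have "MinDist y B \<le> dist y b" unfolding mindist_eq[OF cB(2)] by (rule infdist_le[OF b(1)])
    moreover have "0 \<le> MinDist y B" unfolding mindist_eq[OF cB(2)] by (rule infdist_nonneg)
    ultimately have "(MinDist y B)\<^sup>2 \<le> (dist y b)\<^sup>2" by (simp add: power_mono)
    with 1 show ?thesis by linarith
  qed
  have "(MaxDist z E)\<^sup>2 - (MinDist z B)\<^sup>2
      = (1 - t) * ((dist x q)\<^sup>2 - (dist x b)\<^sup>2) + t * ((dist y q)\<^sup>2 - (dist y b)\<^sup>2)"
    unfolding q(2) mz by (simp only: z_def key_identity)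
  also have "\<dots> \<le> (1 - t) * ((MaxDist x E)\<^sup>2 - (MinDist x B)\<^sup>2) + t * ((MaxDist y E)\<^sup>2 - (MinDist y B)\<^sup>2)"
    using t hx hy by (intro add_mono mult_left_mono) auto
  finally show "(MaxDist ((1 - t) *\<^sub>R x + t *\<^sub>R y) E)\<^sup>2 - (MinDist ((1 - t) *\<^sub>R x + t *\<^sub>R y) B)\<^sup>2
      \<le> (1 - t) * ((MaxDist x E)\<^sup>2 - (MinDist x B)\<^sup>2) + t * ((MaxDist y E)\<^sup>2 - (MinDist y B)\<^sup>2)"
    unfolding z_def .
qed

end
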